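(* Let $G$ be a finite transitive permutation group on a set $\Omega$, let $\alpha\in\Omega$, and let $x\in G_\alpha$ have prime order. Then $x$ is quasi-semiregular on $\Omega$ if and only if $\mathrm{Sub}_G(x)\le G_\alpha$.
   Context: For $x\in G$, the subnormaliser is $\mathrm{Sub}_G(x)=\langle g\in G : \langle x\rangle \text{ is subnormal in } \langle x,g\rangle\rangle$. A permutation $g$ is quasi-semiregular if $\langle g\rangle$ has a unique fixed point and acts semiregularly (only the identity fixes a point) on the remaining points. *)

theory Defs
  imports "HOL-Algebra.Algebra" "HOL-Computational_Algebra.Primes"
begin

inductive subnormal :: "('g, 'b) monoid_scheme \<Rightarrow> 'g set \<Rightarrow> 'g set \<Rightarrow> bool"
  for G where
    refl: "subgroup K G \<Longrightarrow> subnormal G K K"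
  | step: "subnormal G H L \<Longrightarrow> L \<lhd> (G\<lparr>carrier := K\<rparr>) \<Longrightarrow> subgroup K G \<Longrightarrow> subnormal G H K"

definition subnormaliser :: "('g, 'b) monoid_scheme \<Rightarrow> 'g \<Rightarrow> 'g set" where
  "subnormaliser G x =
     generate G {g \<in> carrier G. subnormal G (generate G {x}) (generate G {x, g})}"

definition quasi_semiregular :: "'a set \<Rightarrow> ('a \<Rightarrow> 'a) \<Rightarrow> bool" where
  "quasi_semiregular \<Omega> g \<longleftrightarrow>
     (let C = generate (BijGroup \<Omega>) {g} in
      \<exists>\<omega>0 \<in> \<Omega>. (\<forall>\<omega>\<in>\<Omega>. (\<forall>h\<in>C. h \<omega> = \<omega>) \<longleftrightarrow> \<omega> = \<omega>0) \<and>
        (\<forall>\<omega>\<in>\<Omega> - {\<omega>0}. \<forall>h\<in>C. h \<omega> = \<omega> \<longrightarrow> h = \<one>\<^bsub>BijGroup \<Omega>\<^esub>))"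

end

theory Submission
  imports Defs
begin

lemma (in group_action) card_fixed_mod:
  assumes finE: "finite E" and finG: "finite (carrier G)" and pr: "Factorial_Ring.prime p"
    and ordG: "order G = p ^ k"
  shows "card E mod p = card {x \<in> E. \<forall>g\<in>carrier G. \<phi> g x = x} mod p"
proof -
  define Fx where "Fx = {x \<in> E. \<forall>g\<in>carrier G. \<phi> g x = x}"
  have grp: "group G" using group_hom group_hom.axioms(1) by blast
  have orbE: "orbit G \<phi> x \<subseteq> E" if "x \<in> E" for x
    using that element_image unfolding orbit_def by auto
  have fixorb: "orbit G \<phi> x = {x}" if "x \<in> Fx" for x
    using that monoid.one_closed[OF group.is_monoid[OF grp]] unfolding Fx_def orbit_def by force
  have nfix: "p dvd card (orbit G \<phi> x)" if "x \<in> E" "x \<notin> Fx" for x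
  proof -
    have "card (orbit G \<phi> x) * card (stabilizer G \<phi> x) = p ^ k"
      using orbit_stabilizer_theorem[OF that(1)] ordG by simp
    hence "card (orbit G \<phi> x) dvd p ^ k" by (metis dvd_triv_left)
    then obtain i where i: "card (orbit G \<phi> x) = p ^ i"
      using divides_primepow_nat[OF pr] by blast
    show ?thesis
    proof (cases i)
      case 0
      have fin: "finite (orbit G \<phi> x)" using orbE[OF that(1)] finE finite_subset by blast
      have "card (orbit G \<phi> x) = 1" using i 0 by simp
      then obtain y where y: "orbit G \<phi> x = {y}" using card_1_singletonE by blast
      have "x \<in> orbit G \<phi> x" using orbit_refl[OF that(1)] .
      hence "orbit G \<phi> x = {x}" using y by simp
      hence "x \<in> Fx" using that(1) unfolding Fx_def orbit_def by blast
      with that show ?thesis by simp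
    next
      case (Suc j)
      then show ?thesis using i by simp
    qed
  qed
  define f where "f x = (if x \<in> Fx then 0 else (1::nat))" for x
  have sumE: "(\<Sum>x\<in>E. f x) = card (E - Fx)"
  proof -
    have "(\<Sum>x\<in>E. f x) = (\<Sum>x\<in>E - Fx. 1)"
      unfolding f_def using finE by (simp add: sum.If_cases Diff_eq Int_commute)
    thus ?thesis by simp
  qed
  have "p dvd (\<Sum>orb\<in>(orbits G E \<phi>). \<Sum>x\<in>orb. f x)"
  proof (rule dvd_sum)
    fix orb assume "orb \<in> orbits G E \<phi>"
    then obtain x0 where x0: "x0 \<in> E" "orb = orbit G \<phi> x0" unfolding orbits_def by blast
    show "p dvd (\<Sum>x\<in>orb. f x)"
    proof (cases "x0 \<in> Fx")
      case True
      then show ?thesis using fixorb x0 f_def by simp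
    next
      case False
      have "\<forall>y\<in>orb. f y = 1"
      proof
        fix y assume y: "y \<in> orb"
        have yE: "y \<in> E" using orbE x0 y by blast
        show "f y = 1"
        proof (rule ccontr)
          assume "f y \<noteq> 1"
          hence "y \<in> Fx" unfolding f_def by (auto split: if_splits)
          moreover have "x0 \<in> orbit G \<phi> y" using orbit_sym[OF x0(1) yE] y x0 by simp
          ultimately have "x0 = y" using fixorb by blast
          thus False using False \<open>y \<in> Fx\<close> by simp
        qed
      qed
      hence "(\<Sum>x\<in>orb. f x) = card orb" by simp
      thus ?thesis using nfix[OF x0(1) False] x0 by simp
    qed
  qed
  hence "p dvd card (E - Fx)" using disjoint_sum[OF finE, of f] sumE by simp
  then obtain c where c: "card (E - Fx) = p * c" by blast
  have sub: "Fx \<subseteq> E" unfolding Fx_def by blast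
  have "card (E - Fx) = card E - card Fx" using card_Diff_subset[OF finite_subset[OF sub finE] sub] .
  moreover have "card Fx \<le> card E" using card_mono[OF finE sub] .
  ultimately have "card E = card Fx + p * c" using c by linarith
  thus ?thesis unfolding Fx_def by simp
qed



context group begin

lemma rcos_eq_iff:
  assumes "subgroup H G" "a \<in> carrier G" "b \<in> carrier G"
  shows "(H #> a = H #> b) \<longleftrightarrow> a \<otimes> inv b \<in> H"
proof
  assume "H #> a = H #> b"
  hence "a \<in> H #> b" using rcos_self[OF assms(2,1)] by simp
  thus "a \<otimes> inv b \<in> H" using subgroup.rcos_module_imp[OF assms(1) is_group assms(3)] by blast
next
  assume "a \<otimes> inv b \<in> H"
  hence "a \<in> H #> b" using subgroup.rcos_module_rev[OF assms(1) is_group assms(3,2)] by blast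
  thus "H #> a = H #> b" using repr_independence[OF _ assms(3,1)] by simp
qed

lemma rcos_in_rcosets:
  assumes "subgroup H G" "C \<in> rcosets H" "a \<in> carrier G"
  shows "C #> a \<in> rcosets H"
proof -
  obtain g where g: "g \<in> carrier G" "C = H #> g" using assms(2) unfolding RCOSETS_def by blast
  have "C #> a = H #> (g \<otimes> a)" using g coset_mult_assoc[OF subgroup.subset[OF assms(1)] g(1) assms(3)] by simp
  thus ?thesis using rcosetsI[OF subgroup.subset[OF assms(1)]] g(1) assms(3) by simp
qed

lemma coset_action:
  assumes Q: "subgroup Q G" and H: "subgroup H G"
  shows "group_action (G\<lparr>carrier := Q\<rparr>) (rcosets H) (\<lambda>q. \<lambda>C\<in>rcosets H. C #> inv q)"
proof -
  have HC: "H \<subseteq> carrier G" using subgroup.subset[OF H] .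
  have Csub: "C \<subseteq> carrier G" if "C \<in> rcosets H" for C
    using subgroup.rcosets_carrier[OF H is_group that] .
  have Bij: "(\<lambda>C\<in>rcosets H. C #> inv q) \<in> Bij (rcosets H)" if q: "q \<in> carrier G" for q
  proof -
    have "bij_betw (\<lambda>C\<in>rcosets H. C #> inv q) (rcosets H) (rcosets H)"
    proof (rule bij_betwI[where g = "\<lambda>C\<in>rcosets H. C #> q"])
      show "(\<lambda>C\<in>rcosets H. C #> inv q) \<in> rcosets H \<rightarrow> rcosets H"
        using rcos_in_rcosets[OF H] q by auto
      show "(\<lambda>C\<in>rcosets H. C #> q) \<in> rcosets H \<rightarrow> rcosets H"
        using rcos_in_rcosets[OF H] q by auto
      show "(\<lambda>C\<in>rcosets H. C #> q) ((\<lambda>C\<in>rcosets H. C #> inv q) x) = x" if "x \<in> rcosets H" for x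
        using that rcos_in_rcosets[OF H] q Csub[OF that] by (simp add: coset_mult_assoc)
      show "(\<lambda>C\<in>rcosets H. C #> inv q) ((\<lambda>C\<in>rcosets H. C #> q) y) = y" if "y \<in> rcosets H" for y
        using that rcos_in_rcosets[OF H] q Csub[OF that] by (simp add: coset_mult_assoc)
    qed
    thus ?thesis unfolding Bij_def by auto
  qed
  show ?thesis
    unfolding group_action_def group_hom_def group_hom_axioms_def
  proof (intro conjI)
    show "group (G\<lparr>carrier := Q\<rparr>)" using subgroup_imp_group[OF Q] .
    show "group (BijGroup (rcosets H))" using group_BijGroup .
    show "(\<lambda>q. \<lambda>C\<in>rcosets H. C #> inv q) \<in> hom (G\<lparr>carrier := Q\<rparr>) (BijGroup (rcosets H))"
    proof (rule homI)
      fix q assume "q \<in> carrier (G\<lparr>carrier := Q\<rparr>)"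
      hence "q \<in> carrier G" using subgroup.subset[OF Q] by auto
      thus "(\<lambda>C\<in>rcosets H. C #> inv q) \<in> carrier (BijGroup (rcosets H))"
        using Bij by (simp add: BijGroup_def)
    next
      fix q r assume "q \<in> carrier (G\<lparr>carrier := Q\<rparr>)" "r \<in> carrier (G\<lparr>carrier := Q\<rparr>)"
      hence q: "q \<in> carrier G" and r: "r \<in> carrier G" using subgroup.subset[OF Q] by auto
      show "(\<lambda>C\<in>rcosets H. C #> inv (q \<otimes>\<^bsub>G\<lparr>carrier := Q\<rparr>\<^esub> r)) =
            (\<lambda>C\<in>rcosets H. C #> inv q) \<otimes>\<^bsub>BijGroup (rcosets H)\<^esub> (\<lambda>C\<in>rcosets H. C #> inv r)"
        using Bij[OF q] Bij[OF r]
        apply (simp add: BijGroup_def compose_def)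
        apply (rule ext)
        using rcos_in_rcosets[OF H] q r Csub by (auto simp add: coset_mult_assoc inv_mult_group)
    qed
  qed
qed

lemma coset_fixed_mod:
  assumes Q: "subgroup Q G" and H: "subgroup H G" and fin: "finite (carrier G)"
    and pr: "Factorial_Ring.prime p" and cQ: "card Q = p ^ k"
  shows "card (rcosets H) mod p = card {C \<in> rcosets H. \<forall>q\<in>Q. C #> inv q = C} mod p"
proof -
  interpret A: group_action "G\<lparr>carrier := Q\<rparr>" "rcosets H" "\<lambda>q. \<lambda>C\<in>rcosets H. C #> inv q"
    using coset_action[OF Q H] .
  have finR: "finite (rcosets H)"
    using fin unfolding RCOSETS_def by auto
  have "card (rcosets H) mod p = card {x \<in> rcosets H. \<forall>g\<in>carrier (G\<lparr>carrier := Q\<rparr>).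
      (\<lambda>C\<in>rcosets H. C #> inv g) x = x} mod p"
    by (rule A.card_fixed_mod[OF finR _ pr, of k])
       (use fin Q cQ finite_subset[OF subgroup.subset[OF Q] fin] in \<open>auto simp: order_def\<close>)
  also have "{x \<in> rcosets H. \<forall>g\<in>carrier (G\<lparr>carrier := Q\<rparr>). (\<lambda>C\<in>rcosets H. C #> inv g) x = x}
      = {C \<in> rcosets H. \<forall>q\<in>Q. C #> inv q = C}" by auto
  finally show ?thesis .
qed

lemma conj_into:
  assumes Q: "subgroup Q G" and S: "subgroup S G" and fin: "finite (carrier G)"
    and pr: "Factorial_Ring.prime p" and cQ: "card Q = p ^ k"
    and nd: "\<not> p dvd card (rcosets S)"
  shows "\<exists>g\<in>carrier G. \<forall>q\<in>Q. g \<otimes> q \<otimes> inv g \<in> S"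
proof -
  have "card {C \<in> rcosets S. \<forall>q\<in>Q. C #> inv q = C} mod p \<noteq> 0"
    using coset_fixed_mod[OF Q S fin pr cQ] nd by (simp add: dvd_eq_mod_eq_0)
  hence "{C \<in> rcosets S. \<forall>q\<in>Q. C #> inv q = C} \<noteq> {}" by (metis card.empty mod_0)
  then obtain C where C: "C \<in> rcosets S" "\<forall>q\<in>Q. C #> inv q = C" by blast
  then obtain g where g: "g \<in> carrier G" "C = S #> g" unfolding RCOSETS_def by blast
  have "g \<otimes> q \<otimes> inv g \<in> S" if q: "q \<in> Q" for q
  proof -
    have iq: "inv q \<in> Q" using subgroup.m_inv_closed[OF Q q] .
    have qc: "q \<in> carrier G" using subgroup.mem_carrier[OF Q q] .
    have "S #> g #> inv (inv q) = S #> g" using C(2) iq g by simp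
    hence "S #> (g \<otimes> q) = S #> g"
      using coset_mult_assoc[OF subgroup.subset[OF S] g(1)] qc by simp
    thus ?thesis using rcos_eq_iff[OF S] g qc by simp
  qed
  thus ?thesis using g by blast
qed

end


definition nrm :: "('g, 'b) monoid_scheme \<Rightarrow> 'g set \<Rightarrow> 'g set" where
  "nrm G Q = {g \<in> carrier G. \<forall>q\<in>Q. g \<otimes>\<^bsub>G\<^esub> q \<otimes>\<^bsub>G\<^esub> inv\<^bsub>G\<^esub> g \<in> Q \<and> inv\<^bsub>G\<^esub> g \<otimes>\<^bsub>G\<^esub> q \<otimes>\<^bsub>G\<^esub> g \<in> Q}"

context group begin

lemma inv_cancel_l1 [simp]: "x \<in> carrier G \<Longrightarrow> y \<in> carrier G \<Longrightarrow> inv x \<otimes> (x \<otimes> y) = y"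
  by (simp add: m_assoc[symmetric])
lemma inv_cancel_l2 [simp]: "x \<in> carrier G \<Longrightarrow> y \<in> carrier G \<Longrightarrow> x \<otimes> (inv x \<otimes> y) = y"
  by (simp add: m_assoc[symmetric])

lemma nrm_subgroup:
  assumes Q: "subgroup Q G"
  shows "subgroup (nrm G Q) G"
proof (rule subgroupI)
  show "nrm G Q \<subseteq> carrier G" unfolding nrm_def by blast
  have "\<one> \<in> nrm G Q" unfolding nrm_def using subgroup.mem_carrier[OF Q] by auto
  thus "nrm G Q \<noteq> {}" by blast
next
  fix a assume a: "a \<in> nrm G Q"
  hence ac: "a \<in> carrier G" unfolding nrm_def by blast
  show "inv a \<in> nrm G Q" using a ac unfolding nrm_def by auto
next
  fix a b assume a: "a \<in> nrm G Q" and b: "b \<in> nrm G Q"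
  hence ac: "a \<in> carrier G" and bc: "b \<in> carrier G" unfolding nrm_def by auto
  have "a \<otimes> b \<otimes> q \<otimes> inv (a \<otimes> b) \<in> Q \<and> inv (a \<otimes> b) \<otimes> q \<otimes> (a \<otimes> b) \<in> Q" if q: "q \<in> Q" for q
  proof -
    have qc: "q \<in> carrier G" using subgroup.mem_carrier[OF Q q] .
    have 1: "b \<otimes> q \<otimes> inv b \<in> Q" "inv a \<otimes> q \<otimes> a \<in> Q" using a b q unfolding nrm_def by auto
    have 2: "a \<otimes> (b \<otimes> q \<otimes> inv b) \<otimes> inv a \<in> Q" "inv b \<otimes> (inv a \<otimes> q \<otimes> a) \<otimes> b \<in> Q"
      using a b 1 unfolding nrm_def by auto
    have "a \<otimes> b \<otimes> q \<otimes> inv (a \<otimes> b) = a \<otimes> (b \<otimes> q \<otimes> inv b) \<otimes> inv a"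
      using ac bc qc by (simp add: m_assoc inv_mult_group)
    moreover have "inv (a \<otimes> b) \<otimes> q \<otimes> (a \<otimes> b) = inv b \<otimes> (inv a \<otimes> q \<otimes> a) \<otimes> b"
      using ac bc qc by (simp add: m_assoc inv_mult_group)
    ultimately show ?thesis using 2 by simp
  qed
  thus "a \<otimes> b \<in> nrm G Q" unfolding nrm_def using ac bc by auto
qed

lemma self_nrm:
  assumes Q: "subgroup Q G"
  shows "Q \<subseteq> nrm G Q"
  unfolding nrm_def using Q
  by (auto simp: subgroup.mem_carrier subgroup.m_closed subgroup.m_inv_closed)

lemma nrm_normal:
  assumes Q: "subgroup Q G" and R: "subgroup R G" and QR: "Q \<subseteq> R" and RN: "R \<subseteq> nrm G Q"
  shows "Q \<lhd> G\<lparr>carrier := R\<rparr>"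
proof -
  interpret GR: group "G\<lparr>carrier := R\<rparr>" using subgroup_imp_group[OF R] .
  show ?thesis
    unfolding GR.normal_inv_iff
  proof (intro conjI ballI)
    show "subgroup Q (G\<lparr>carrier := R\<rparr>)" using subgroup_incl[OF Q R QR] .
    fix x h assume x: "x \<in> carrier (G\<lparr>carrier := R\<rparr>)" and h: "h \<in> Q"
    hence xR: "x \<in> R" by simp
    have "x \<otimes> h \<otimes> inv x \<in> Q" using RN xR h unfolding nrm_def by blast
    thus "x \<otimes>\<^bsub>G\<lparr>carrier := R\<rparr>\<^esub> h \<otimes>\<^bsub>G\<lparr>carrier := R\<rparr>\<^esub> inv\<^bsub>G\<lparr>carrier := R\<rparr>\<^esub> x \<in> Q"
      using m_inv_consistent[OF R xR] by simp
  qed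
qed

lemma nrm_finite:
  assumes Q: "subgroup Q G" and fin: "finite Q" and g: "g \<in> carrier G"
    and cj: "\<forall>q\<in>Q. g \<otimes> q \<otimes> inv g \<in> Q"
  shows "g \<in> nrm G Q"
proof -
  define f where "f q = g \<otimes> q \<otimes> inv g" for q
  have sub: "f ` Q \<subseteq> Q" using cj f_def by auto
  have inj: "inj_on f Q"
  proof (rule inj_onI)
    fix a b assume a: "a \<in> Q" and b: "b \<in> Q" and e: "f a = f b"
    have ac: "a \<in> carrier G" and bc: "b \<in> carrier G" using a b subgroup.mem_carrier[OF Q] by auto
    show "a = b" using e ac bc g unfolding f_def
      by (metis inv_closed m_closed r_cancel l_cancel)
  qed
  have eq: "f ` Q = Q" using endo_inj_surj[OF fin sub inj] .
  have "inv g \<otimes> q \<otimes> g \<in> Q" if q: "q \<in> Q" for q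
  proof -
    obtain q' where q': "q' \<in> Q" "q = f q'" using eq q by blast
    have qc: "q' \<in> carrier G" using subgroup.mem_carrier[OF Q q'(1)] .
    have "inv g \<otimes> q \<otimes> g = q'" using q' qc g unfolding f_def
      by (simp add: m_assoc)
    thus ?thesis using q' by simp
  qed
  thus ?thesis unfolding nrm_def using cj g by auto
qed

lemma conj_subgroup:
  assumes S: "subgroup S G" and a: "a \<in> carrier G"
  shows "subgroup ((\<lambda>s. a \<otimes> s \<otimes> inv a) ` S) G"
    and "card ((\<lambda>s. a \<otimes> s \<otimes> inv a) ` S) = card S"
proof -
  have sc: "s \<in> carrier G" if "s \<in> S" for s using subgroup.mem_carrier[OF S that] .
  show "subgroup ((\<lambda>s. a \<otimes> s \<otimes> inv a) ` S) G"
  proof (rule subgroupI)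
    show "(\<lambda>s. a \<otimes> s \<otimes> inv a) ` S \<subseteq> carrier G" using sc a by auto
    show "(\<lambda>s. a \<otimes> s \<otimes> inv a) ` S \<noteq> {}" using subgroup.one_closed[OF S] by blast
  next
    fix x assume "x \<in> (\<lambda>s. a \<otimes> s \<otimes> inv a) ` S"
    then obtain s where s: "s \<in> S" "x = a \<otimes> s \<otimes> inv a" by blast
    have "inv x = a \<otimes> inv s \<otimes> inv a" using s sc a by (simp add: inv_mult_group m_assoc)
    thus "inv x \<in> (\<lambda>s. a \<otimes> s \<otimes> inv a) ` S" using subgroup.m_inv_closed[OF S s(1)] by blast
  next
    fix x y assume "x \<in> (\<lambda>s. a \<otimes> s \<otimes> inv a) ` S" "y \<in> (\<lambda>s. a \<otimes> s \<otimes> inv a) ` S"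
    then obtain s t where s: "s \<in> S" "x = a \<otimes> s \<otimes> inv a" and t: "t \<in> S" "y = a \<otimes> t \<otimes> inv a" by blast
    have "x \<otimes> y = a \<otimes> (s \<otimes> t) \<otimes> inv a" using s t sc a by (simp add: m_assoc)
    thus "x \<otimes> y \<in> (\<lambda>s. a \<otimes> s \<otimes> inv a) ` S" using subgroup.m_closed[OF S s(1) t(1)] by blast
  qed
  have "inj_on (\<lambda>s. a \<otimes> s \<otimes> inv a) S"
    by (rule inj_onI) (metis a sc inv_closed m_closed r_cancel l_cancel)
  thus "card ((\<lambda>s. a \<otimes> s \<otimes> inv a) ` S) = card S" by (rule card_image)
qed

end


context group begin

lemma nrm_count:
  assumes Q: "subgroup Q G" and fin: "finite (carrier G)"
    and pr: "Factorial_Ring.prime p" and cQ: "card Q = p ^ k"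
  shows "card (rcosets Q) mod p = card (rcosets\<^bsub>G\<lparr>carrier := nrm G Q\<rparr>\<^esub> Q) mod p"
proof -
  have finQ: "finite Q" using finite_subset[OF subgroup.subset[OF Q] fin] .
  have QC: "Q \<subseteq> carrier G" using subgroup.subset[OF Q] .
  have "{C \<in> rcosets Q. \<forall>q\<in>Q. C #> inv q = C} = rcosets\<^bsub>G\<lparr>carrier := nrm G Q\<rparr>\<^esub> Q"
  proof (intro equalityI subsetI)
    fix C assume "C \<in> {C \<in> rcosets Q. \<forall>q\<in>Q. C #> inv q = C}"
    hence C: "C \<in> rcosets Q" "\<forall>q\<in>Q. C #> inv q = C" by auto
    then obtain g where g: "g \<in> carrier G" "C = Q #> g" unfolding RCOSETS_def by blast
    have "g \<otimes> q \<otimes> inv g \<in> Q" if q: "q \<in> Q" for q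
    proof -
      have iq: "inv q \<in> Q" using subgroup.m_inv_closed[OF Q q] .
      have qc: "q \<in> carrier G" using subgroup.mem_carrier[OF Q q] .
      have "Q #> g #> inv (inv q) = Q #> g" using C(2) iq g by simp
      hence "Q #> (g \<otimes> q) = Q #> g"
        using coset_mult_assoc[OF QC g(1)] qc by simp
      thus ?thesis using rcos_eq_iff[OF Q] g qc by simp
    qed
    hence "g \<in> nrm G Q" using nrm_finite[OF Q finQ g(1)] by blast
    thus "C \<in> rcosets\<^bsub>G\<lparr>carrier := nrm G Q\<rparr>\<^esub> Q"
      using g unfolding RCOSETS_def r_coset_def by auto
  next
    fix C assume "C \<in> rcosets\<^bsub>G\<lparr>carrier := nrm G Q\<rparr>\<^esub> Q"
    then obtain g where g: "g \<in> nrm G Q" "C = Q #> g" unfolding RCOSETS_def r_coset_def by auto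
    have gc: "g \<in> carrier G" using g unfolding nrm_def by blast
    have "C #> inv q = C" if q: "q \<in> Q" for q
    proof -
      have iq: "inv q \<in> Q" using subgroup.m_inv_closed[OF Q q] .
      have iqc: "inv q \<in> carrier G" using subgroup.mem_carrier[OF Q iq] .
      have "g \<otimes> inv q \<otimes> inv g \<in> Q" using g(1) iq unfolding nrm_def by blast
      hence "Q #> (g \<otimes> inv q) = Q #> g" using rcos_eq_iff[OF Q] gc iqc by simp
      thus ?thesis using g coset_mult_assoc[OF QC gc iqc] by simp
    qed
    moreover have "C \<in> rcosets Q" using g gc rcosetsI[OF QC] by simp
    ultimately show "C \<in> {C \<in> rcosets Q. \<forall>q\<in>Q. C #> inv q = C}" by blast
  qed
  thus ?thesis using coset_fixed_mod[OF Q Q fin pr cQ] by simp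
qed

lemma growth:
  assumes Q: "subgroup Q G" and fin: "finite (carrier G)"
    and pr: "Factorial_Ring.prime p" and cQ: "card Q = p ^ k"
    and dv: "p dvd card (rcosets Q)"
  shows "\<exists>R. subgroup R G \<and> Q \<subseteq> R \<and> R \<subseteq> nrm G Q \<and> card Q < card R \<and> (\<exists>a. card R = p ^ a)"
proof -
  define N where "N = nrm G Q"
  have N: "subgroup N G" unfolding N_def using nrm_subgroup[OF Q] .
  interpret GN: group "G\<lparr>carrier := N\<rparr>" using subgroup_imp_group[OF N] .
  have QN: "Q \<subseteq> N" unfolding N_def using self_nrm[OF Q] .
  have QsN: "subgroup Q (G\<lparr>carrier := N\<rparr>)" using subgroup_incl[OF Q N QN] .
  have finN: "finite N" using finite_subset[OF subgroup.subset[OF N] fin] .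
  have finGN: "finite (carrier (G\<lparr>carrier := N\<rparr>))" using finN by simp
  have lagN: "card (rcosets\<^bsub>G\<lparr>carrier := N\<rparr>\<^esub> Q) * card Q = card N"
    using GN.lagrange[OF QsN] by (simp add: order_def)
  have "p dvd card (rcosets\<^bsub>G\<lparr>carrier := N\<rparr>\<^esub> Q)"
    using nrm_count[OF Q fin pr cQ] dv unfolding N_def by (simp add: dvd_eq_mod_eq_0)
  hence "p ^ Suc k dvd card N" using lagN cQ by (metis mult_dvd_mono dvd_refl power_Suc2 mult.commute)
  moreover have cN0: "card N \<noteq> 0" using finN subgroup.one_closed[OF N] by auto
  moreover have nu: "\<not> is_unit p" using pr by (metis not_prime_unit)
  ultimately have ak: "Suc k \<le> multiplicity p (card N)" using multiplicity_geI by blast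
  define a where "a = multiplicity p (card N)"
  define m where "m = card N div p ^ a"
  have Nam: "card N = p ^ a * m" unfolding m_def a_def using multiplicity_dvd[of p "card N"] by (metis dvd_mult_div_cancel)
  have ndm: "\<not> p dvd m" unfolding m_def a_def using multiplicity_decompose[OF cN0 nu] .
  obtain S where S: "subgroup S (G\<lparr>carrier := N\<rparr>)" "card S = p ^ a"
    using sylow_thm[OF pr GN.is_group _ finGN, of a m] Nam by (auto simp: order_def)
  have "card (rcosets\<^bsub>G\<lparr>carrier := N\<rparr>\<^esub> S) * p ^ a = p ^ a * m"
    using GN.lagrange[OF S(1)] S(2) Nam by (simp add: order_def)
  hence "card (rcosets\<^bsub>G\<lparr>carrier := N\<rparr>\<^esub> S) = m"
    using pr by (simp add: prime_gt_0_nat)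
  hence nd: "\<not> p dvd card (rcosets\<^bsub>G\<lparr>carrier := N\<rparr>\<^esub> S)" using ndm by simp
  obtain n where n: "n \<in> N" "\<forall>q\<in>Q. n \<otimes> q \<otimes> inv\<^bsub>G\<lparr>carrier := N\<rparr>\<^esub> n \<in> S"
    using GN.conj_into[OF QsN S(1) finGN pr cQ nd] by auto
  have nc: "n \<in> carrier G" using n(1) subgroup.mem_carrier[OF N] by blast
  have n2: "\<forall>q\<in>Q. n \<otimes> q \<otimes> inv n \<in> S" using n m_inv_consistent[OF N n(1)] by simp
  have SG: "subgroup S G" using incl_subgroup[OF N S(1)] .
  have SN: "S \<subseteq> N" using subgroup.subset[OF S(1)] by simp
  define R where "R = (\<lambda>s. inv n \<otimes> s \<otimes> inv (inv n)) ` S"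
  have R: "subgroup R G" "card R = card S" unfolding R_def using conj_subgroup[OF SG inv_closed[OF nc]] by auto
  have "Q \<subseteq> R"
  proof
    fix q assume q: "q \<in> Q"
    have qc: "q \<in> carrier G" using subgroup.mem_carrier[OF Q q] .
    have "q = inv n \<otimes> (n \<otimes> q \<otimes> inv n) \<otimes> inv (inv n)" using qc nc by (simp add: m_assoc)
    thus "q \<in> R" unfolding R_def using n2 q by blast
  qed
  moreover have "R \<subseteq> N"
  proof
    fix r assume "r \<in> R"
    then obtain s where s: "s \<in> S" "r = inv n \<otimes> s \<otimes> inv (inv n)" unfolding R_def by blast
    have "inv n \<in> N" using subgroup.m_inv_closed[OF N n(1)] .
    hence "inv (inv n) \<in> N" using subgroup.m_inv_closed[OF N] by blast
    moreover have "s \<in> N" using s SN by blast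
    ultimately show "r \<in> N" using s \<open>inv n \<in> N\<close> by (simp add: subgroup.m_closed[OF N])
  qed
  moreover have "card Q < card R"
  proof -
    have "k < a" using ak unfolding a_def by simp
    moreover have "1 < p" using prime_gt_1_nat[OF pr] by simp
    ultimately have "p ^ k < p ^ a" by (simp add: power_strict_increasing)
    thus ?thesis using R(2) S(2) cQ by simp
  qed
  ultimately show ?thesis using R S(2) unfolding N_def by auto
qed

lemma sn_basic:
  assumes "subnormal G H K"
  shows "subgroup H G \<and> subgroup K G \<and> H \<subseteq> K"
  using assms
proof (induction rule: subnormal.induct)
  case (refl K) then show ?case by simp
next
  case (step H L K)
  have "subgroup L (G\<lparr>carrier := K\<rparr>)" using step(2) normal_imp_subgroup by blast
  hence "L \<subseteq> K" using subgroup.subset by fastforce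
  then show ?case using step by auto
qed

lemma sn_restrict:
  assumes "subnormal G H K"
  shows "subgroup M G \<Longrightarrow> H \<subseteq> M \<Longrightarrow> M \<subseteq> K \<Longrightarrow> subnormal G H M"
  using assms
proof (induction arbitrary: M rule: subnormal.induct)
  case (refl K) then show ?case using subnormal.refl by auto
next
  case (step H L K)
  have HL: "subgroup H G" "subgroup L G" "H \<subseteq> L" using sn_basic[OF step(1)] by auto
  have LM: "subgroup (L \<inter> M) G" using subgroups_Inter_pair[OF HL(2) step(5)] .
  have IH: "subnormal G H (L \<inter> M)" using step.IH[OF LM] HL step(6) by auto
  interpret GK: group "G\<lparr>carrier := K\<rparr>" using subgroup_imp_group[OF step(3)] .
  interpret GM: group "G\<lparr>carrier := M\<rparr>" using subgroup_imp_group[OF step(5)] .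
  have nK: "\<forall>x\<in>K. \<forall>h\<in>L. x \<otimes> h \<otimes> inv x \<in> L"
    using step(2) unfolding GK.normal_inv_iff using m_inv_consistent[OF step(3)] by simp
  have "L \<inter> M \<lhd> G\<lparr>carrier := M\<rparr>"
    unfolding GM.normal_inv_iff
  proof (intro conjI ballI)
    show "subgroup (L \<inter> M) (G\<lparr>carrier := M\<rparr>)" using subgroup_incl[OF LM step(5)] by blast
    fix x h assume x: "x \<in> carrier (G\<lparr>carrier := M\<rparr>)" and h: "h \<in> L \<inter> M"
    hence xM: "x \<in> M" by simp
    have "x \<otimes> h \<otimes> inv x \<in> L" using nK xM step(7) h by blast
    moreover have "x \<otimes> h \<otimes> inv x \<in> M" using xM h step(5)
      by (simp add: subgroup.m_closed subgroup.m_inv_closed)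
    ultimately show "x \<otimes>\<^bsub>G\<lparr>carrier := M\<rparr>\<^esub> h \<otimes>\<^bsub>G\<lparr>carrier := M\<rparr>\<^esub> inv\<^bsub>G\<lparr>carrier := M\<rparr>\<^esub> x \<in> L \<inter> M"
      using m_inv_consistent[OF step(5) xM] by simp
  qed
  thus ?case using subnormal.step[OF IH _ step(5)] by blast
qed

end


locale perm_setting =
  fixes \<Omega> :: "'a set" and G :: "('a \<Rightarrow> 'a) set"
  assumes sg: "subgroup G (BijGroup \<Omega>)" and finG: "finite G"
begin

abbreviation "GG \<equiv> (BijGroup \<Omega>)\<lparr>carrier := G\<rparr>"

lemma grp: "group GG"
  using subgroup.subgroup_is_group[OF sg group_BijGroup] .

lemma memBij: "g \<in> G \<Longrightarrow> g \<in> Bij \<Omega>"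
  using subgroup.subset[OF sg] by (auto simp: BijGroup_def)

lemma mult_app: "g \<in> G \<Longrightarrow> h \<in> G \<Longrightarrow> \<gamma> \<in> \<Omega> \<Longrightarrow> (g \<otimes>\<^bsub>GG\<^esub> h) \<gamma> = g (h \<gamma>)"
  using memBij by (simp add: BijGroup_def compose_def)

lemma one_app: "\<gamma> \<in> \<Omega> \<Longrightarrow> \<one>\<^bsub>GG\<^esub> \<gamma> = \<gamma>"
  by (simp add: BijGroup_def)

lemma img: "g \<in> G \<Longrightarrow> \<gamma> \<in> \<Omega> \<Longrightarrow> g \<gamma> \<in> \<Omega>"
  using memBij Bij_imp_funcset by blast

lemma inv_app1: "g \<in> G \<Longrightarrow> \<gamma> \<in> \<Omega> \<Longrightarrow> (inv\<^bsub>GG\<^esub> g) (g \<gamma>) = \<gamma>"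
proof -
  assume g: "g \<in> G" and c: "\<gamma> \<in> \<Omega>"
  interpret GG: group GG using grp .
  have ig: "inv\<^bsub>GG\<^esub> g \<in> G" using GG.inv_closed g by simp
  have "(inv\<^bsub>GG\<^esub> g \<otimes>\<^bsub>GG\<^esub> g) \<gamma> = \<gamma>" using GG.l_inv g one_app c by simp
  thus ?thesis using mult_app[OF ig g c] by simp
qed

lemma inv_app2: "g \<in> G \<Longrightarrow> \<gamma> \<in> \<Omega> \<Longrightarrow> g ((inv\<^bsub>GG\<^esub> g) \<gamma>) = \<gamma>"
proof -
  assume g: "g \<in> G" and c: "\<gamma> \<in> \<Omega>"
  interpret GG: group GG using grp .
  have ig: "inv\<^bsub>GG\<^esub> g \<in> G" using GG.inv_closed g by simp
  have "(g \<otimes>\<^bsub>GG\<^esub> inv\<^bsub>GG\<^esub> g) \<gamma> = \<gamma>" using GG.r_inv g one_app c by simp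
  thus ?thesis using mult_app[OF g ig c] by simp
qed

lemma stab_subgroup:
  assumes c: "\<gamma> \<in> \<Omega>"
  shows "subgroup {g \<in> G. g \<gamma> = \<gamma>} GG"
proof -
  interpret GG: group GG using grp .
  show ?thesis
  proof (rule GG.subgroupI)
    show "{g \<in> G. g \<gamma> = \<gamma>} \<subseteq> carrier GG" by auto
    show "{g \<in> G. g \<gamma> = \<gamma>} \<noteq> {}" using GG.one_closed one_app[OF c] by auto
  next
    fix a assume a: "a \<in> {g \<in> G. g \<gamma> = \<gamma>}"
    hence "(inv\<^bsub>GG\<^esub> a) \<gamma> = \<gamma>" using inv_app1[of a \<gamma>] c by auto
    thus "inv\<^bsub>GG\<^esub> a \<in> {g \<in> G. g \<gamma> = \<gamma>}" using GG.inv_closed a by auto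
  next
    fix a b assume "a \<in> {g \<in> G. g \<gamma> = \<gamma>}" "b \<in> {g \<in> G. g \<gamma> = \<gamma>}"
    thus "a \<otimes>\<^bsub>GG\<^esub> b \<in> {g \<in> G. g \<gamma> = \<gamma>}" using mult_app c GG.m_closed by auto
  qed
qed

lemma fixgen:
  assumes y: "y \<in> G" and c: "\<gamma> \<in> \<Omega>" and f: "y \<gamma> = \<gamma>"
  shows "\<forall>h \<in> generate GG {y}. h \<gamma> = \<gamma>"
proof -
  interpret GG: group GG using grp .
  have "generate GG {y} \<subseteq> {g \<in> G. g \<gamma> = \<gamma>}"
    by (rule GG.generate_subgroup_incl[OF _ stab_subgroup[OF c]]) (use y f in auto)
  thus ?thesis by blast
qed

end



context perm_setting begin

lemma fwd:
  assumes a: "\<alpha> \<in> \<Omega>" and x: "x \<in> G" and xa: "x \<alpha> = \<alpha>"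
    and FixA: "\<forall>\<omega>\<in>\<Omega>. x \<omega> = \<omega> \<longrightarrow> \<omega> = \<alpha>"
  shows "subnormaliser GG x \<subseteq> {g \<in> G. g \<alpha> = \<alpha>}"
proof -
  interpret GG: group GG using grp .
  define XX where "XX = generate GG {x}"
  have xX: "x \<in> XX" unfolding XX_def by (rule generate.incl) simp
  have sn: "H = XX \<longrightarrow> K \<subseteq> {g \<in> G. g \<alpha> = \<alpha>}" if "subnormal GG H K" for H K
    using that
  proof (induction rule: subnormal.induct)
    case (refl K)
    then show ?case using fixgen[OF x a xa] unfolding XX_def
      using subgroup.subset[OF refl] by auto
  next
    case (step H L K)
    show ?case
    proof
      assume HX: "H = XX"
      have LS: "L \<subseteq> {g \<in> G. g \<alpha> = \<alpha>}" using step.IH HX by blast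
      have XL: "XX \<subseteq> L" using GG.sn_basic[OF step(1)] HX by auto
      have KG: "K \<subseteq> G" using subgroup.subset[OF step(3)] by simp
      interpret GK: group "GG\<lparr>carrier := K\<rparr>" using GG.subgroup_imp_group[OF step(3)] .
      have nK: "\<forall>y\<in>K. \<forall>h\<in>L. y \<otimes>\<^bsub>GG\<^esub> h \<otimes>\<^bsub>GG\<^esub> inv\<^bsub>GG\<^esub> y \<in> L"
        using step(2) unfolding GK.normal_inv_iff using GG.m_inv_consistent[OF step(3)] by simp
      show "K \<subseteq> {g \<in> G. g \<alpha> = \<alpha>}"
      proof
        fix k assume k: "k \<in> K"
        have kG: "k \<in> G" using k KG by blast
        have ik: "inv\<^bsub>GG\<^esub> k \<in> K" using subgroup.m_inv_closed[OF step(3) k] by simp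
        have "inv\<^bsub>GG\<^esub> k \<otimes>\<^bsub>GG\<^esub> x \<otimes>\<^bsub>GG\<^esub> inv\<^bsub>GG\<^esub> (inv\<^bsub>GG\<^esub> k) \<in> L"
          using nK ik XL xX by blast
        hence "inv\<^bsub>GG\<^esub> k \<otimes>\<^bsub>GG\<^esub> x \<otimes>\<^bsub>GG\<^esub> k \<in> L" using kG by simp
        hence e: "(inv\<^bsub>GG\<^esub> k \<otimes>\<^bsub>GG\<^esub> x \<otimes>\<^bsub>GG\<^esub> k) \<alpha> = \<alpha>" using LS by blast
        have ikG: "inv\<^bsub>GG\<^esub> k \<in> G" using GG.inv_closed kG by simp
        have ikx: "inv\<^bsub>GG\<^esub> k \<otimes>\<^bsub>GG\<^esub> x \<in> G" using GG.m_closed ikG x by simp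
        have "(inv\<^bsub>GG\<^esub> k \<otimes>\<^bsub>GG\<^esub> x \<otimes>\<^bsub>GG\<^esub> k) \<alpha> = (inv\<^bsub>GG\<^esub> k \<otimes>\<^bsub>GG\<^esub> x) (k \<alpha>)"
          using mult_app[OF ikx kG a] .
        also have "\<dots> = (inv\<^bsub>GG\<^esub> k) (x (k \<alpha>))" using mult_app[OF ikG x img[OF kG a]] .
        finally have "(inv\<^bsub>GG\<^esub> k) (x (k \<alpha>)) = \<alpha>" using e by simp
        hence "k ((inv\<^bsub>GG\<^esub> k) (x (k \<alpha>))) = k \<alpha>" by simp
        hence "x (k \<alpha>) = k \<alpha>" using inv_app2[OF kG img[OF x img[OF kG a]]] by simp
        hence "k \<alpha> = \<alpha>" using FixA img[OF kG a] by blast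
        thus "k \<in> {g \<in> G. g \<alpha> = \<alpha>}" using kG by simp
      qed
    qed
  qed
  show ?thesis
    unfolding subnormaliser_def
  proof (rule GG.generate_subgroup_incl[OF _ stab_subgroup[OF a]])
    show "{g \<in> carrier GG. subnormal GG (generate GG {x}) (generate GG {x, g})} \<subseteq> {g \<in> G. g \<alpha> = \<alpha>}"
    proof
      fix g assume "g \<in> {g \<in> carrier GG. subnormal GG (generate GG {x}) (generate GG {x, g})}"
      hence g: "g \<in> G" "subnormal GG XX (generate GG {x, g})" unfolding XX_def by auto
      have "g \<in> generate GG {x, g}" by (rule generate.incl) simp
      thus "g \<in> {g \<in> G. g \<alpha> = \<alpha>}" using sn[OF g(2)] by blast
    qed
  qed
qed

end


lemma (in group) conj_mult_eq:
  "a \<in> carrier G \<Longrightarrow> b \<in> carrier G \<Longrightarrow> q \<in> carrier G \<Longrightarrow>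
   a \<otimes> b \<otimes> q \<otimes> inv (a \<otimes> b) = a \<otimes> (b \<otimes> q \<otimes> inv b) \<otimes> inv a"
  by (simp add: m_assoc inv_mult_group)

context perm_setting begin

lemma keyn:
  assumes x: "x \<in> G" and snP: "subnormal GG (generate GG {x}) P"
    and finP: "finite P" and n: "n \<in> nrm GG P"
  shows "n \<in> subnormaliser GG x"
proof -
  interpret GG: group GG using grp .
  have P: "subgroup P GG" and XP: "generate GG {x} \<subseteq> P" using GG.sn_basic[OF snP] by auto
  have NP: "subgroup (nrm GG P) GG" using GG.nrm_subgroup[OF P] .
  have PN: "P \<subseteq> nrm GG P" using GG.self_nrm[OF P] .
  have norm: "P \<lhd> GG\<lparr>carrier := nrm GG P\<rparr>" using GG.nrm_normal[OF P NP PN subset_refl] .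
  have sn1: "subnormal GG (generate GG {x}) (nrm GG P)" using subnormal.step[OF snP norm NP] .
  have nG: "n \<in> G" using n unfolding nrm_def by simp
  have xg: "x \<in> generate GG {x}" by (rule generate.incl) simp
  have sub: "{x, n} \<subseteq> nrm GG P" using xg XP PN n by blast
  have M: "subgroup (generate GG {x, n}) GG" using GG.generate_is_subgroup x nG by simp
  have XM: "generate GG {x} \<subseteq> generate GG {x, n}" using GG.mono_generate by simp
  have MN: "generate GG {x, n} \<subseteq> nrm GG P" using GG.generate_subgroup_incl[OF sub NP] .
  have "subnormal GG (generate GG {x}) (generate GG {x, n})"
    using GG.sn_restrict[OF sn1 M XM MN] .
  hence "n \<in> {g \<in> carrier GG. subnormal GG (generate GG {x}) (generate GG {x, g})}" using nG by simp
  thus ?thesis unfolding subnormaliser_def by (rule generate.incl)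
qed

lemma bwd:
  assumes a: "\<alpha> \<in> \<Omega>" and x: "x \<in> G" and xa: "x \<alpha> = \<alpha>"
    and pr: "Factorial_Ring.prime (group.ord GG x)"
    and tr: "\<forall>\<beta>\<in>\<Omega>. \<forall>\<gamma>\<in>\<Omega>. \<exists>g\<in>G. g \<beta> = \<gamma>"
    and SubA: "subnormaliser GG x \<subseteq> {g \<in> G. g \<alpha> = \<alpha>}"
  shows "\<forall>\<omega>\<in>\<Omega>. x \<omega> = \<omega> \<longrightarrow> \<omega> = \<alpha>"
proof (intro ballI impI)
  interpret GG: group GG using grp .
  fix \<beta> assume b: "\<beta> \<in> \<Omega>" and xb: "x \<beta> = \<beta>"
  show "\<beta> = \<alpha>"
  proof (rule ccontr)
    assume ba: "\<beta> \<noteq> \<alpha>"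
    define p where "p = GG.ord x"
    have pr': "Factorial_Ring.prime p" using pr unfolding p_def .
    define XX where "XX = generate GG {x}"
    define Gb where "Gb = {g \<in> G. g \<beta> = \<beta>}"
    have Gb: "subgroup Gb GG" unfolding Gb_def using stab_subgroup[OF b] .
    interpret GGb: group "GG\<lparr>carrier := Gb\<rparr>" using GG.subgroup_imp_group[OF Gb] .
    have finGb: "finite (carrier (GG\<lparr>carrier := Gb\<rparr>))" using finG unfolding Gb_def by simp
    define PP where "PP = {P. subgroup P GG \<and> P \<subseteq> Gb \<and> (\<exists>k. card P = p ^ k) \<and> subnormal GG XX P}"
    have XXs: "subgroup XX GG" unfolding XX_def using GG.generate_is_subgroup x by simp
    have cXX: "card XX = p" unfolding XX_def p_def using GG.generate_pow_card x by simp
    have XXG: "XX \<subseteq> G" using subgroup.subset[OF XXs] by simp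
    have XXGb: "XX \<subseteq> Gb" using XXG fixgen[OF x b xb] unfolding Gb_def XX_def by blast
    have ek: "\<exists>k. card XX = p ^ k" using cXX by (intro exI[of _ 1]) simp
    have "XX \<in> PP" unfolding PP_def using XXs XXGb ek subnormal.refl[OF XXs] by blast
    have "\<forall>P. P \<in> PP \<longrightarrow> card P \<le> card G"
    proof (intro allI impI)
      fix P assume "P \<in> PP"
      hence "subgroup P GG" unfolding PP_def by blast
      hence "P \<subseteq> carrier GG" by (rule subgroup.subset)
      hence "P \<subseteq> G" by simp
      thus "card P \<le> card G" using card_mono[OF finG] by blast
    qed
    hence "\<forall>P. P \<in> PP \<longrightarrow> card P < Suc (card G)" by auto
    hence "\<exists>P. P \<in> PP \<and> (\<forall>Q. Q \<in> PP \<longrightarrow> card Q \<le> card P)"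
      by (rule Lattices_Big.ex_has_greatest_nat[of "\<lambda>P. P \<in> PP", OF \<open>XX \<in> PP\<close>])
    then obtain P where P: "P \<in> PP" and Pmax: "\<forall>Q. Q \<in> PP \<longrightarrow> card Q \<le> card P"
      by blast
    have PG: "subgroup P GG" and PGb: "P \<subseteq> Gb" and snP: "subnormal GG XX P"
      using P unfolding PP_def by auto
    obtain k where cP: "card P = p ^ k" using P unfolding PP_def by auto
    have "P \<subseteq> G" using subgroup.subset[OF PG] by simp
    hence finP: "finite P" using finite_subset finG by blast
    have PsGb: "subgroup P (GG\<lparr>carrier := Gb\<rparr>)" using GG.subgroup_incl[OF PG Gb PGb] .
    have nd: "\<not> p dvd card (rcosets\<^bsub>GG\<lparr>carrier := Gb\<rparr>\<^esub> P)"
    proof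
      assume dv: "p dvd card (rcosets\<^bsub>GG\<lparr>carrier := Gb\<rparr>\<^esub> P)"
      obtain R where R: "subgroup R (GG\<lparr>carrier := Gb\<rparr>)" "P \<subseteq> R" "R \<subseteq> nrm (GG\<lparr>carrier := Gb\<rparr>) P"
          "card P < card R" "\<exists>a. card R = p ^ a"
        using GGb.growth[OF PsGb finGb pr' cP dv] by blast
      have RG: "subgroup R GG" using GG.incl_subgroup[OF Gb R(1)] .
      have RGb: "R \<subseteq> Gb" using subgroup.subset[OF R(1)] by simp
      have "P \<lhd> (GG\<lparr>carrier := Gb\<rparr>)\<lparr>carrier := R\<rparr>" using GGb.nrm_normal[OF PsGb R(1) R(2) R(3)] .
      hence nr: "P \<lhd> GG\<lparr>carrier := R\<rparr>" by simp
      have "subnormal GG XX R" using subnormal.step[OF snP nr RG] .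
      hence "R \<in> PP" unfolding PP_def using RG RGb R(5) by blast
      thus False using Pmax R(4) by fastforce
    qed
    obtain g where g: "g \<in> G" "g \<alpha> = \<beta>" using tr a b by blast
    have Pfix: "\<forall>q\<in>P. q \<alpha> = \<alpha>"
    proof
      fix q assume q: "q \<in> P"
      have "q \<in> nrm GG P" using GG.self_nrm[OF PG] q by blast
      hence "q \<in> subnormaliser GG x" using keyn[OF x snP[unfolded XX_def] finP] by blast
      thus "q \<alpha> = \<alpha>" using SubA by blast
    qed
    define P' where "P' = (\<lambda>q. g \<otimes>\<^bsub>GG\<^esub> q \<otimes>\<^bsub>GG\<^esub> inv\<^bsub>GG\<^esub> g) ` P"
    have gc: "g \<in> carrier GG" using g by simp
    have P'G: "subgroup P' GG" and cP': "card P' = p ^ k"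
      unfolding P'_def using GG.conj_subgroup[OF PG gc] cP by auto
    have igG: "inv\<^bsub>GG\<^esub> g \<in> G" using GG.inv_closed gc by simp
    have igb: "(inv\<^bsub>GG\<^esub> g) \<beta> = \<alpha>" using inv_app1[OF g(1) a] g(2) by simp
    have "P' \<subseteq> Gb"
    proof
      fix r assume "r \<in> P'"
      then obtain q where q: "q \<in> P" "r = g \<otimes>\<^bsub>GG\<^esub> q \<otimes>\<^bsub>GG\<^esub> inv\<^bsub>GG\<^esub> g" unfolding P'_def by blast
      have qG: "q \<in> G" using q(1) subgroup.subset[OF PG] by auto
      have gq: "g \<otimes>\<^bsub>GG\<^esub> q \<in> G" using GG.m_closed gc qG by simp
      have "r \<beta> = (g \<otimes>\<^bsub>GG\<^esub> q) ((inv\<^bsub>GG\<^esub> g) \<beta>)" using q(2) mult_app[OF gq igG b] by simp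
      also have "\<dots> = g (q \<alpha>)" using igb mult_app[OF g(1) qG a] by simp
      also have "\<dots> = \<beta>" using bspec[OF Pfix q(1)] g(2) by simp
      finally have "r \<beta> = \<beta>" .
      moreover have "r \<in> G" using q(2) GG.m_closed gq igG by simp
      ultimately show "r \<in> Gb" unfolding Gb_def by simp
    qed
    hence P'sGb: "subgroup P' (GG\<lparr>carrier := Gb\<rparr>)" using GG.subgroup_incl[OF P'G Gb] by simp
    obtain h where h: "h \<in> Gb" "\<forall>q\<in>P'. h \<otimes>\<^bsub>GG\<^esub> q \<otimes>\<^bsub>GG\<^esub> inv\<^bsub>GG\<lparr>carrier := Gb\<rparr>\<^esub> h \<in> P"
      using GGb.conj_into[OF P'sGb PsGb finGb pr' cP' nd] by auto
    have h2: "\<forall>q\<in>P'. h \<otimes>\<^bsub>GG\<^esub> q \<otimes>\<^bsub>GG\<^esub> inv\<^bsub>GG\<^esub> h \<in> P"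
      using h GG.m_inv_consistent[OF Gb h(1)] by simp
    have hG: "h \<in> G" and hb: "h \<beta> = \<beta>" using h(1) unfolding Gb_def by auto
    have hc: "h \<in> carrier GG" using hG by simp
    define n where "n = h \<otimes>\<^bsub>GG\<^esub> g"
    have nc: "n \<in> carrier GG" unfolding n_def using GG.m_closed[OF hc gc] .
    have "\<forall>q\<in>P. n \<otimes>\<^bsub>GG\<^esub> q \<otimes>\<^bsub>GG\<^esub> inv\<^bsub>GG\<^esub> n \<in> P"
    proof
      fix q assume q: "q \<in> P"
      have qc: "q \<in> carrier GG" using q subgroup.subset[OF PG] by auto
      have "n \<otimes>\<^bsub>GG\<^esub> q \<otimes>\<^bsub>GG\<^esub> inv\<^bsub>GG\<^esub> n
          = h \<otimes>\<^bsub>GG\<^esub> (g \<otimes>\<^bsub>GG\<^esub> q \<otimes>\<^bsub>GG\<^esub> inv\<^bsub>GG\<^esub> g) \<otimes>\<^bsub>GG\<^esub> inv\<^bsub>GG\<^esub> h"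
        unfolding n_def by (rule GG.conj_mult_eq[OF hc gc qc])
      moreover have "g \<otimes>\<^bsub>GG\<^esub> q \<otimes>\<^bsub>GG\<^esub> inv\<^bsub>GG\<^esub> g \<in> P'" unfolding P'_def using q by blast
      ultimately show "n \<otimes>\<^bsub>GG\<^esub> q \<otimes>\<^bsub>GG\<^esub> inv\<^bsub>GG\<^esub> n \<in> P" using h2 by simp
    qed
    hence "n \<in> nrm GG P" using GG.nrm_finite[OF PG finP nc] by blast
    hence "n \<in> subnormaliser GG x" using keyn[OF x snP[unfolded XX_def] finP] by blast
    hence "n \<alpha> = \<alpha>" using SubA by blast
    moreover have "n \<alpha> = \<beta>" unfolding n_def using mult_app[OF hG g(1) a] g(2) hb by simp
    ultimately show False using ba by simp
  qed
qed

end


lemma bezout_prime_helper: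
  fixes p :: nat and i :: int
  assumes pr: "Factorial_Ring.prime p" and nd: "\<not> int p dvd i"
  shows "\<exists>v. int p dvd (1 - i * v)"
proof -
  have pi: "Factorial_Ring.prime (int p)" using pr by (simp only: prime_nat_int_transfer)
  have "coprime (int p) i" using prime_imp_coprime[OF pi nd] .
  hence g1: "gcd (int p) i = 1" by (simp only: coprime_iff_gcd_eq_1)
  obtain u v where uv: "u * int p + v * i = gcd (int p) i" using bezout_int[of "int p" i] by blast
  have "1 - i * v = u * int p" using uv g1 by (simp add: algebra_simps)
  hence "int p dvd (1 - i * v)" by simp
  thus ?thesis by blast
qed

context perm_setting begin

lemma qs_iff:
  assumes a: "\<alpha> \<in> \<Omega>" and x: "x \<in> G" and xa: "x \<alpha> = \<alpha>"
    and pr: "Factorial_Ring.prime (group.ord GG x)"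
  shows "quasi_semiregular \<Omega> x \<longleftrightarrow> (\<forall>\<omega>\<in>\<Omega>. x \<omega> = \<omega> \<longrightarrow> \<omega> = \<alpha>)"
proof -
  interpret GG: group GG using grp .
  have xc: "x \<in> carrier GG" using x by simp
  have Ceq: "generate (BijGroup \<Omega>) {x} = generate GG {x}"
    using group.generate_consistent[OF group_BijGroup, of "{x}" G] x sg by simp
  have FA: "(\<forall>h\<in>generate GG {x}. h \<omega> = \<omega>) \<longleftrightarrow> x \<omega> = \<omega>" if w: "\<omega> \<in> \<Omega>" for \<omega>
  proof
    assume "\<forall>h\<in>generate GG {x}. h \<omega> = \<omega>"
    moreover have "x \<in> generate GG {x}" by (rule generate.incl) simp
    ultimately show "x \<omega> = \<omega>" by blast
  qed (use fixgen[OF x w] in blast)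
  have one_eq: "\<one>\<^bsub>BijGroup \<Omega>\<^esub> = \<one>\<^bsub>GG\<^esub>" by simp
  show ?thesis
    unfolding quasi_semiregular_def Let_def Ceq
  proof
    assume "\<exists>\<omega>0\<in>\<Omega>. (\<forall>\<omega>\<in>\<Omega>. (\<forall>h\<in>generate GG {x}. h \<omega> = \<omega>) = (\<omega> = \<omega>0)) \<and>
        (\<forall>\<omega>\<in>\<Omega> - {\<omega>0}. \<forall>h\<in>generate GG {x}. h \<omega> = \<omega> \<longrightarrow> h = \<one>\<^bsub>BijGroup \<Omega>\<^esub>)"
    then obtain \<omega>0 where w0: "\<omega>0 \<in> \<Omega>" "\<forall>\<omega>\<in>\<Omega>. (\<forall>h\<in>generate GG {x}. h \<omega> = \<omega>) = (\<omega> = \<omega>0)"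
      by blast
    have "\<alpha> = \<omega>0" using bspec[OF w0(2) a, THEN iffD1, OF FA[OF a, THEN iffD2, OF xa]] .
    show "\<forall>\<omega>\<in>\<Omega>. x \<omega> = \<omega> \<longrightarrow> \<omega> = \<alpha>"
    proof (intro ballI impI)
      fix \<omega> assume w: "\<omega> \<in> \<Omega>" and xw: "x \<omega> = \<omega>"
      have "\<omega> = \<omega>0" using bspec[OF w0(2) w, THEN iffD1, OF FA[OF w, THEN iffD2, OF xw]] .
      thus "\<omega> = \<alpha>" using \<open>\<alpha> = \<omega>0\<close> by simp
    qed
  next
    assume Fix: "\<forall>\<omega>\<in>\<Omega>. x \<omega> = \<omega> \<longrightarrow> \<omega> = \<alpha>"
    have part2: "h = \<one>\<^bsub>BijGroup \<Omega>\<^esub>" if w: "\<omega> \<in> \<Omega> - {\<alpha>}" and h: "h \<in> generate GG {x}"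
      and hw: "h \<omega> = \<omega>" for \<omega> h
    proof (rule ccontr)
      assume "h \<noteq> \<one>\<^bsub>BijGroup \<Omega>\<^esub>"
      hence h1: "h \<noteq> \<one>\<^bsub>GG\<^esub>" unfolding one_eq[symmetric] .
      have "h \<in> {x [^]\<^bsub>GG\<^esub> (k::int) | k. k \<in> UNIV}" using h GG.generate_pow[OF xc] by simp
      then obtain i :: int where hi: "h = x [^]\<^bsub>GG\<^esub> i" by blast
      have nd: "\<not> int (GG.ord x) dvd i"
      proof
        assume "int (GG.ord x) dvd i"
        hence "x [^]\<^bsub>GG\<^esub> i = \<one>\<^bsub>GG\<^esub>" using GG.int_pow_eq_id[OF xc, of i] by (rule iffD2[rotated])
        thus False using h1 hi by simp
      qed
      obtain u where du: "int (GG.ord x) dvd (1 - i * u)" using bezout_prime_helper[OF pr nd] by blast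
      have hc: "h \<in> carrier GG" unfolding hi by (rule GG.int_pow_closed[OF xc])
      have "h [^]\<^bsub>GG\<^esub> u = x [^]\<^bsub>GG\<^esub> (i * u)" unfolding hi by (rule GG.int_pow_pow[OF xc])
      also have "\<dots> = x [^]\<^bsub>GG\<^esub> (1::int)"
        using GG.int_pow_eq[OF xc, of "i * u" 1] du by (rule iffD2)
      also have "\<dots> = x" using GG.int_pow_1[OF xc] .
      finally have xe: "h [^]\<^bsub>GG\<^esub> u = x" .
      have hsub: "{h} \<subseteq> carrier GG" using hc by blast
      have hin: "h \<in> generate GG {h}" by (rule generate.incl) simp
      have "h [^]\<^bsub>GG\<^esub> u \<in> generate GG {h}"
        using GG.subgroup_int_pow_closed[OF GG.generate_is_subgroup[OF hsub] hin] .
      hence xin: "x \<in> generate GG {h}" using xe by simp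
      have hG: "h \<in> G" using hc by simp
      have wO: "\<omega> \<in> \<Omega>" using w by blast
      have "x \<omega> = \<omega>" using fixgen[OF hG wO hw] xin by blast
      thus False using Fix w by blast
    qed
    show "\<exists>\<omega>0\<in>\<Omega>. (\<forall>\<omega>\<in>\<Omega>. (\<forall>h\<in>generate GG {x}. h \<omega> = \<omega>) = (\<omega> = \<omega>0)) \<and>
        (\<forall>\<omega>\<in>\<Omega> - {\<omega>0}. \<forall>h\<in>generate GG {x}. h \<omega> = \<omega> \<longrightarrow> h = \<one>\<^bsub>BijGroup \<Omega>\<^esub>)"
      using a part2 FA Fix xa by blast
  qed
qed

end

theorem theorem3p3:
  fixes \<Omega> :: "'a set" and G :: "('a \<Rightarrow> 'a) set" and \<alpha> :: 'a and x :: "'a \<Rightarrow> 'a"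
  assumes "subgroup G (BijGroup \<Omega>)"
    and "finite G"
    and "\<forall>\<beta>\<in>\<Omega>. \<forall>\<gamma>\<in>\<Omega>. \<exists>g\<in>G. g \<beta> = \<gamma>"
    and "\<alpha> \<in> \<Omega>"
    and "x \<in> G" and "x \<alpha> = \<alpha>"
    and "Factorial_Ring.prime (group.ord ((BijGroup \<Omega>)\<lparr>carrier := G\<rparr>) x)"
  shows "quasi_semiregular \<Omega> x \<longleftrightarrow>
           subnormaliser ((BijGroup \<Omega>)\<lparr>carrier := G\<rparr>) x \<subseteq> {g \<in> G. g \<alpha> = \<alpha>}"
proof -
  interpret perm_setting \<Omega> G using assms(1,2) unfolding perm_setting_def by blast
  have Q: "quasi_semiregular \<Omega> x \<longleftrightarrow> (\<forall>\<omega>\<in>\<Omega>. x \<omega> = \<omega> \<longrightarrow> \<omega> = \<alpha>)"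
    using qs_iff[OF assms(4,5,6,7)] .
  show ?thesis
  proof
    assume "quasi_semiregular \<Omega> x"
    hence "\<forall>\<omega>\<in>\<Omega>. x \<omega> = \<omega> \<longrightarrow> \<omega> = \<alpha>" by (rule Q[THEN iffD1])
    thus "subnormaliser ((BijGroup \<Omega>)\<lparr>carrier := G\<rparr>) x \<subseteq> {g \<in> G. g \<alpha> = \<alpha>}"
      by (rule fwd[OF assms(4,5,6)])
  next
    assume "subnormaliser ((BijGroup \<Omega>)\<lparr>carrier := G\<rparr>) x \<subseteq> {g \<in> G. g \<alpha> = \<alpha>}"
    hence "\<forall>\<omega>\<in>\<Omega>. x \<omega> = \<omega> \<longrightarrow> \<omega> = \<alpha>" by (rule bwd[OF assms(4,5,6,7,3)])
    thus "quasi_semiregular \<Omega> x" by (rule Q[THEN iffD2])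
  qed
qed


end
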